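(* Let $z$ be a real function of one real variable, twice continuously differentiable near $t=0$ with $\dot z(0)\neq0$, and let $f(u_+,u_-)$ be defined near $(0,0)$ implicitly by $$f=\frac{2u_+}{\dot z(t)}+z(t),\qquad u_-=\frac{u_+}{\dot z(t)^2}+t,$$ with $t=t(u_+,u_-)$ the solution of the second equation near $t=0$. Then $f$ satisfies (i) $f$ is analytic near $(u_+,u_-)=(0,0)$ and (ii) $f(u_+,u_-)=u_++u_-+O(|u_\pm|^2)$, if and only if $z$ is analytic near $t=0$ and $z(t)=t+O(t^2)$.
   Context: $\dot z$ denotes the derivative of $z$; analytic near a point means given by a convergent power series on a neighborhood of that point; $O(|u_\pm|^2)$ denotes terms of total order at least two in $(u_+,u_-)$. *)

theory Defs
  imports "HOL-Analysis.Analysis" "HOL-Library.Landau_Symbols"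
begin

definition real_analytic_at :: "(real \<Rightarrow> real) \<Rightarrow> real \<Rightarrow> bool" where
  "real_analytic_at g x \<longleftrightarrow>
     (\<exists>a::nat \<Rightarrow> real. \<exists>r>0. \<forall>t\<in>ball x r. ((\<lambda>n. a n * (t - x) ^ n) has_sum g t) UNIV)"

definition real_analytic2_at :: "(real \<times> real \<Rightarrow> real) \<Rightarrow> real \<times> real \<Rightarrow> bool" where
  "real_analytic2_at g p \<longleftrightarrow>
     (\<exists>a::nat \<Rightarrow> nat \<Rightarrow> real. \<exists>r>0. \<forall>u\<in>ball p r.
        ((\<lambda>(i,j). a i j * (fst u - fst p) ^ i * (snd u - snd p) ^ j) has_sum g u) UNIV)"

end

theory Submission
  imports Defs "HOL-Complex_Analysis.Complex_Analysis"
begin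

lemma circle_param_cont:
  fixes F :: "complex \<Rightarrow> complex \<Rightarrow> complex"
  assumes S: "open S" and r: "0 < r"
    and cont: "continuous_on (S \<times> sphere 0 r) (\<lambda>(x,y). F x y)"
  shows "continuous_on S (\<lambda>x. contour_integral (circlepath 0 r) (F x))"
proof -
  have pim: "path_image (circlepath 0 r) = sphere 0 r" using r by simp
  have integ: "F x contour_integrable_on circlepath 0 r" if "x \<in> S" for x
  proof (rule contour_integrable_continuous_circlepath)
    have "continuous_on (sphere 0 r) ((\<lambda>(x,y). F x y) \<circ> (\<lambda>y. (x,y)))"
      by (intro continuous_on_compose continuous_on_subset[OF cont]) (auto intro!: continuous_intros simp: that)
    then show "continuous_on (path_image (circlepath 0 r)) (F x)"
      unfolding pim by (simp add: o_def)
  qed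
  have "\<exists>d>0. \<forall>x'\<in>S. dist x' w < d \<longrightarrow>
          dist (contour_integral (circlepath 0 r) (F x')) (contour_integral (circlepath 0 r) (F w)) \<le> e"
    if w: "w \<in> S" and e: "0 < e" for w e
  proof -
    obtain \<delta> where "\<delta>>0" and \<delta>: "cball w \<delta> \<subseteq> S" using open_contains_cball S w by force
    let ?TZ = "cball w \<delta> \<times> sphere (0::complex) r"
    have "uniformly_continuous_on ?TZ (\<lambda>(x,y). F x y)"
      by (intro compact_uniformly_continuous continuous_on_subset[OF cont])
         (use \<delta> in \<open>auto intro: compact_Times\<close>)
    then obtain \<eta> where "\<eta>>0"
        and \<eta>: "\<And>x x'. \<lbrakk>x\<in>?TZ; x'\<in>?TZ; dist x' x < \<eta>\<rbrakk> \<Longrightarrow>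
                         dist ((\<lambda>(x,y). F x y) x') ((\<lambda>(x,y). F x y) x) < e/(2*pi*r)"
      using e r by (auto elim: uniformly_continuous_onE [where \<epsilon> = "e/(2*pi*r)"])
    have le: "norm (contour_integral (circlepath 0 r) (\<lambda>y. F x' y - F w y)) \<le> e"
      if x': "x' \<in> S" "dist x' w < \<delta>" "dist x' w < \<eta>" for x'
    proof -
      have "(\<lambda>y. F x' y - F w y) contour_integrable_on circlepath 0 r"
        by (intro contour_integrable_diff integ x' w)
      moreover have "norm (F x' y - F w y) \<le> e/(2*pi*r)" if "norm (y - 0) = r" for y
      proof -
        have "dist (F x' y) (F w y) < e/(2*pi*r)"
          using \<eta>[of "(w,y)" "(x',y)"] that x' \<open>\<delta>>0\<close>
          by (auto simp: dist_Pair_Pair dist_commute)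
        then show ?thesis by (simp add: dist_norm)
      qed
      ultimately have "norm (contour_integral (circlepath 0 r) (\<lambda>y. F x' y - F w y)) \<le> e/(2*pi*r) * (2*pi*r)"
        using e r by (intro has_contour_integral_bound_circlepath[OF has_contour_integral_integral]) auto
      also have "\<dots> = e" using r by simp
      finally show ?thesis .
    qed
    show ?thesis
      using \<open>0 < \<delta>\<close> \<open>0 < \<eta>\<close> w
      by (intro exI[where x="min \<delta> \<eta>"])
         (auto simp: dist_norm contour_integral_diff [OF integ integ, symmetric] intro!: le[unfolded dist_norm])
  qed
  then show ?thesis
    by (metis (no_types, lifting) continuous_onI continuous_on_iff)
qed

lemma circle_param_holo:
  fixes G :: "complex \<Rightarrow> complex \<Rightarrow> complex"
  assumes r: "0 < r" "r < R"
    and cont: "continuous_on (ball 0 R \<times> ball 0 R) (\<lambda>(x,y). G x y)"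
    and hol1: "\<And>y. y \<in> ball 0 R \<Longrightarrow> (\<lambda>x. G x y) holomorphic_on ball 0 R"
    and k: "continuous_on (sphere 0 r) k"
  shows "(\<lambda>x. contour_integral (circlepath 0 r) (\<lambda>y. G x y * k y)) holomorphic_on ball 0 R"
proof -
  have sph: "sphere (0::complex) r \<subseteq> ball 0 R" using r by auto
  have pim: "path_image (circlepath 0 r) = sphere 0 r" using r by simp
  have contG: "continuous_on A (\<lambda>p. G (fst p) (snd p))" if "A \<subseteq> ball 0 R \<times> ball 0 R" for A
    using continuous_on_subset[OF cont that] by (simp add: case_prod_unfold)
  have contGk: "continuous_on (A \<times> sphere 0 r) (\<lambda>(x,y). G x y * k y)" if "A \<subseteq> ball 0 R" for A
  proof -
    have "continuous_on (A \<times> sphere 0 r) (\<lambda>p. G (fst p) (snd p) * k (snd p))"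
      using that sph
      by (intro continuous_intros contG continuous_on_compose2[OF k]) auto
    then show ?thesis by (simp add: case_prod_unfold)
  qed
  have "(\<lambda>x. contour_integral (circlepath 0 r) (\<lambda>y. G x y * k y)) analytic_on ball 0 R"
  proof (rule Morera_triangle)
    show "continuous_on (ball 0 R) (\<lambda>x. contour_integral (circlepath 0 r) (\<lambda>y. G x y * k y))"
      by (rule circle_param_cont) (use r contGk in auto)
    show "open (ball (0::complex) R)" by simp
    fix a b c
    show "convex hull {a, b, c} \<subseteq> ball 0 R \<longrightarrow>
          contour_integral (linepath a b) (\<lambda>x. contour_integral (circlepath 0 r) (\<lambda>y. G x y * k y)) +
          contour_integral (linepath b c) (\<lambda>x. contour_integral (circlepath 0 r) (\<lambda>y. G x y * k y)) +
          contour_integral (linepath c a) (\<lambda>x. contour_integral (circlepath 0 r) (\<lambda>y. G x y * k y)) = 0"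
    proof
      assume hull: "convex hull {a, b, c} \<subseteq> ball 0 R"
      have seg: "closed_segment a b \<subseteq> ball 0 R" "closed_segment b c \<subseteq> ball 0 R" "closed_segment c a \<subseteq> ball 0 R"
        using hull by (meson dual_order.trans segments_subset_convex_hull)+
      have vdc: "continuous_on {0..1} (\<lambda>t. vector_derivative (circlepath 0 r) (at t))"
        by (simp add: vector_derivative_circlepath) (intro continuous_intros)
      have swap: "contour_integral (linepath p q) (\<lambda>x. contour_integral (circlepath 0 r) (\<lambda>y. G x y * k y))
           = contour_integral (circlepath 0 r) (\<lambda>y. contour_integral (linepath p q) (\<lambda>x. G x y) * k y)"
        if pq: "closed_segment p q \<subseteq> ball 0 R" for p q
      proof -
        have "contour_integral (linepath p q) (\<lambda>x. contour_integral (circlepath 0 r) (\<lambda>y. G x y * k y))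
           = contour_integral (circlepath 0 r) (\<lambda>y. contour_integral (linepath p q) (\<lambda>x. G x y * k y))"
          by (rule contour_integral_swap) (use contGk[OF pq] pim vdc in auto)
        also have "\<dots> = contour_integral (circlepath 0 r) (\<lambda>y. contour_integral (linepath p q) (\<lambda>x. G x y) * k y)"
        proof (rule contour_integral_cong[OF refl])
          fix y assume "y \<in> path_image (circlepath 0 r)"
          then have y: "y \<in> ball 0 R" using pim sph r by auto
          have "continuous_on (closed_segment p q) (\<lambda>x. G x y)"
            using holomorphic_on_imp_continuous_on[OF hol1[OF y]] continuous_on_subset pq by blast
          then show "contour_integral (linepath p q) (\<lambda>x. G x y * k y) = contour_integral (linepath p q) (\<lambda>x. G x y) * k y"
            by (intro contour_integral_rmul contour_integrable_continuous_linepath)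
        qed
        finally show ?thesis .
      qed
      have ci: "(\<lambda>y. contour_integral (linepath p q) (\<lambda>x. G x y) * k y) contour_integrable_on circlepath 0 r"
        if pq: "closed_segment p q \<subseteq> ball 0 R" for p q
      proof (rule contour_integrable_continuous_circlepath, unfold pim, intro continuous_intros k)
        have "continuous_on (ball 0 R) (\<lambda>y. contour_integral (linepath p q) (\<lambda>x. G x y))"
        proof (rule contour_integral_continuous_on_linepath_2D[where F="\<lambda>y x. G x y"])
          show "continuous_on (ball 0 R \<times> ball 0 R) (\<lambda>(y, x). G x y)"
          proof -
            have "continuous_on (ball 0 R \<times> ball 0 R) ((\<lambda>(x,y). G x y) \<circ> prod.swap)"
              by (rule continuous_on_compose[OF continuous_on_swap continuous_on_subset[OF cont]]) auto
            then show ?thesis by (simp add: o_def case_prod_unfold)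
          qed
          fix y assume y: "y \<in> ball (0::complex) R"
          show "(\<lambda>x. G x y) contour_integrable_on linepath p q"
            using holomorphic_on_imp_continuous_on[OF hol1[OF y]] continuous_on_subset pq
            by (blast intro: contour_integrable_continuous_linepath)
        qed (use pq in auto)
        then show "continuous_on (sphere 0 r) (\<lambda>y. contour_integral (linepath p q) (\<lambda>x. G x y))"
          using continuous_on_subset sph by blast
      qed
      have tri: "contour_integral (linepath a b) (\<lambda>x. G x y) * k y + contour_integral (linepath b c) (\<lambda>x. G x y) * k y
                 + contour_integral (linepath c a) (\<lambda>x. G x y) * k y = 0"
        if y: "y \<in> path_image (circlepath 0 r)" for y
      proof -
        have y': "y \<in> ball 0 R" using y pim sph r by auto
        have hh: "(\<lambda>x. G x y) holomorphic_on convex hull {a, b, c}"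
          using hol1[OF y'] hull holomorphic_on_subset by blast
        have cc: "(\<lambda>x. G x y) contour_integrable_on linepath p q" if "closed_segment p q \<subseteq> ball 0 R" for p q
          using holomorphic_on_imp_continuous_on[OF hol1[OF y']] continuous_on_subset that
          by (blast intro: contour_integrable_continuous_linepath)
        have "((\<lambda>x. G x y) has_contour_integral 0) (linepath a b +++ linepath b c +++ linepath c a)"
          by (rule Cauchy_theorem_triangle[OF hh])
        then have "contour_integral (linepath a b +++ linepath b c +++ linepath c a) (\<lambda>x. G x y) = 0"
          by (rule contour_integral_unique)
        moreover have "contour_integral (linepath a b +++ linepath b c +++ linepath c a) (\<lambda>x. G x y)
          = contour_integral (linepath a b) (\<lambda>x. G x y) + contour_integral (linepath b c) (\<lambda>x. G x y)
                 + contour_integral (linepath c a) (\<lambda>x. G x y)"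
          using cc[OF seg(1)] cc[OF seg(2)] cc[OF seg(3)]
          by (simp add: contour_integrable_joinI valid_path_join)
        ultimately show ?thesis by (simp add: distrib_right[symmetric])
      qed
      have "contour_integral (circlepath 0 r) (\<lambda>y. contour_integral (linepath a b) (\<lambda>x. G x y) * k y)
          + contour_integral (circlepath 0 r) (\<lambda>y. contour_integral (linepath b c) (\<lambda>x. G x y) * k y)
          + contour_integral (circlepath 0 r) (\<lambda>y. contour_integral (linepath c a) (\<lambda>x. G x y) * k y)
          = contour_integral (circlepath 0 r) (\<lambda>y. contour_integral (linepath a b) (\<lambda>x. G x y) * k y
             + contour_integral (linepath b c) (\<lambda>x. G x y) * k y + contour_integral (linepath c a) (\<lambda>x. G x y) * k y)"
        using ci[OF seg(1)] ci[OF seg(2)] ci[OF seg(3)]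
        by (simp add: contour_integral_add contour_integrable_add)
      also have "\<dots> = 0" by (rule contour_integral_eq_0) (rule tri)
      finally show "contour_integral (linepath a b) (\<lambda>x. contour_integral (circlepath 0 r) (\<lambda>y. G x y * k y)) +
          contour_integral (linepath b c) (\<lambda>x. contour_integral (circlepath 0 r) (\<lambda>y. G x y * k y)) +
          contour_integral (linepath c a) (\<lambda>x. contour_integral (circlepath 0 r) (\<lambda>y. G x y * k y)) = 0"
        by (simp add: swap seg)
    qed
  qed
  then show ?thesis by (simp add: analytic_imp_holomorphic)
qed

lemma geom2_summable:
  fixes q :: real
  assumes q: "0 \<le> q" "q < 1" and M: "0 \<le> M"
  shows "(\<lambda>(j::nat,i::nat). M * q^j * q^i) summable_on UNIV"
proof -
  define f where "f = (\<lambda>(j::nat,i::nat). M * q^j * q^i)"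
  have g: "(\<lambda>n::nat. q^n) summable_on UNIV"
    using q by (subst summable_on_UNIV_nonneg_real_iff) (auto intro: summable_geometric)
  have "(\<lambda>x. norm (f x)) summable_on Sigma UNIV (\<lambda>_. UNIV)"
  proof (rule iffD2[OF Infinite_Sum.abs_summable_on_Sigma_iff], intro conjI ballI)
    fix j :: nat
    show "(\<lambda>i. norm (f (j, i))) summable_on UNIV"
      using summable_on_cmult_right[OF g, of "M * q^j"] q M by (simp add: f_def)
  next
    have "(\<lambda>j::nat. (M * infsum (\<lambda>n::nat. q^n) UNIV) * q ^ j) summable_on UNIV"
      by (rule summable_on_cmult_right[OF g])
    moreover have "(\<Sum>\<^sub>\<infinity>i. norm (f (j, i))) = (M * infsum (\<lambda>n::nat. q^n) UNIV) * q ^ j" for j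
      using q M by (simp add: f_def infsum_cmult_right' infsum_cmult_left' mult_ac)
    ultimately show "(\<lambda>x. norm (\<Sum>\<^sub>\<infinity>i. norm (f (x, i)))) summable_on UNIV"
      using q M by (simp add: infsum_nonneg)
  qed
  then have "f summable_on UNIV" by (simp add: abs_summable_summable)
  then show ?thesis by (simp add: f_def)
qed

lemma two_var_series:
  fixes G :: "complex \<Rightarrow> complex \<Rightarrow> complex"
  assumes R: "0 < R"
    and cont: "continuous_on (ball 0 R \<times> ball 0 R) (\<lambda>(x,y). G x y)"
    and hol1: "\<And>y. y \<in> ball 0 R \<Longrightarrow> (\<lambda>x. G x y) holomorphic_on ball 0 R"
    and hol2: "\<And>x. x \<in> ball 0 R \<Longrightarrow> G x holomorphic_on ball 0 R"
  shows "\<exists>c. \<forall>x y. norm x < R/2 \<longrightarrow> norm y < R/2 \<longrightarrow>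
            ((\<lambda>(i,j). c i j * x^i * y^j) has_sum G x y) UNIV"
proof -
  define r where "r = 3*R/4"
  have r: "0 < r" "r < R" using R by (auto simp: r_def)
  have cb: "cball (0::complex) r \<subseteq> ball 0 R" using r by auto
  obtain M where M: "M > 0" "\<And>x y. x \<in> cball 0 r \<Longrightarrow> y \<in> cball 0 r \<Longrightarrow> norm (G x y) \<le> M"
  proof -
    have "compact ((\<lambda>(x,y). G x y) ` (cball 0 r \<times> cball 0 r))"
      by (intro compact_continuous_image continuous_on_subset[OF cont] compact_Times compact_cball)
         (use cb in auto)
    then obtain B where "B>0" "\<forall>z \<in> (\<lambda>(x,y). G x y) ` (cball 0 r \<times> cball 0 r). norm z \<le> B"
      using compact_imp_bounded bounded_pos by metis
    then show ?thesis using that by force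
  qed
  define b where "b j x = contour_integral (circlepath 0 r) (\<lambda>y. G x y * (1 / y^Suc j)) / (2*pi*\<i>)" for j x
  have bder: "b j x = (deriv ^^ j) (G x) 0 / fact j" if x: "x \<in> ball 0 R" for j x
  proof -
    have cx: "continuous_on (cball 0 r) (G x)"
      using holomorphic_on_imp_continuous_on[OF holomorphic_on_subset[OF hol2[OF x] cb]] .
    have "((\<lambda>u. G x u / (u - 0) ^ Suc j) has_contour_integral (2*pi*\<i> / fact j * (deriv ^^ j) (G x) 0)) (circlepath 0 r)"
      by (rule Cauchy_has_contour_integral_higher_derivative_circlepath[OF cx])
         (use r hol2[OF x] in \<open>auto intro: holomorphic_on_subset\<close>)
    moreover have "(\<lambda>u. G x u / (u - 0) ^ Suc j) = (\<lambda>y. G x y * (1 / y^Suc j))" by (auto simp: fun_eq_iff)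
    ultimately have "contour_integral (circlepath 0 r) (\<lambda>y. G x y * (1 / y^Suc j)) = 2*pi*\<i> / fact j * (deriv ^^ j) (G x) 0"
      by (metis contour_integral_unique)
    then show ?thesis by (simp add: b_def field_simps)
  qed
  have bhol: "b j holomorphic_on ball 0 R" for j
  proof -
    have "(\<lambda>x. contour_integral (circlepath 0 r) (\<lambda>y. G x y * (1 / y^Suc j))) holomorphic_on ball 0 R"
      by (rule circle_param_holo[OF r cont hol1]) (use r in \<open>auto intro!: continuous_intros\<close>)
    then show ?thesis unfolding b_def by (intro holomorphic_intros) auto
  qed
  have bbound: "norm (b j x) \<le> M / r^j" if "x \<in> cball 0 r" for j x
  proof -
    have x: "x \<in> ball 0 R" using that cb by auto
    have "norm ((deriv ^^ j) (G x) 0) \<le> fact j * M / r^j"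
    proof (rule Cauchy_inequality)
      show "G x holomorphic_on ball 0 r" using hol2[OF x] cb by (meson ball_subset_cball holomorphic_on_subset order_trans)
      show "continuous_on (cball 0 r) (G x)"
        using holomorphic_on_imp_continuous_on[OF holomorphic_on_subset[OF hol2[OF x] cb]] .
      show "0 < r" by (rule r)
      fix y :: complex assume "norm (0 - y) = r"
      then show "norm (G x y) \<le> M" using M(2)[OF that, of y] by simp
    qed
    then show ?thesis by (simp add: bder[OF x] norm_divide field_simps)
  qed
  define c where "c i j = (deriv ^^ i) (b j) 0 / fact i" for i j
  have cbound: "norm (c i j) \<le> M / r^j / r^i" for i j
  proof -
    have "norm ((deriv ^^ i) (b j) 0) \<le> fact i * (M / r^j) / r^i"
    proof (rule Cauchy_inequality)
      show "b j holomorphic_on ball 0 r" using bhol[of j] cb by (meson ball_subset_cball holomorphic_on_subset order_trans)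
      show "continuous_on (cball 0 r) (b j)"
        using holomorphic_on_imp_continuous_on[OF holomorphic_on_subset[OF bhol cb]] .
      show "0 < r" by (rule r)
      fix y :: complex assume "norm (0 - y) = r"
      then show "norm (b j y) \<le> M / r^j" by (intro bbound) simp
    qed
    then show ?thesis by (simp add: c_def norm_divide field_simps)
  qed
  show ?thesis
  proof (intro exI allI impI)
    fix x y :: complex assume x: "norm x < R/2" and y: "norm y < R/2"
    define q where "q = (R/2)/r"
    have q: "0 \<le> q" "q < 1" using R by (auto simp: q_def r_def)
    have xq: "norm x / r \<le> q" and yq: "norm y / r \<le> q"
      using x y r by (auto simp: q_def divide_simps)
    have xR: "x \<in> ball 0 R" "y \<in> ball 0 R" "x \<in> cball 0 r" using x y R r by (auto simp: r_def)
    have pw: "(norm x / r)^i \<le> q^i" "(norm y / r)^i \<le> q^i" for i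
      using xq yq r by (auto intro!: power_mono)
    have inner: "((\<lambda>i. c i j * x^i) has_sum b j x) UNIV" for j
    proof (rule norm_summable_imp_has_sum)
      show "(\<lambda>i. c i j * x^i) sums b j x"
        using holomorphic_power_series[OF bhol xR(1)] by (simp add: c_def)
      have "norm (c i j * x^i) \<le> M / r^j * q^i" for i
      proof -
        have "norm (c i j * x^i) = norm (c i j) * norm x ^ i" by (simp add: norm_mult norm_power)
        also have "\<dots> \<le> M / r^j / r^i * norm x ^ i" by (intro mult_right_mono cbound) auto
        also have "\<dots> = M / r^j * (norm x / r)^i" by (simp add: power_divide)
        also have "\<dots> \<le> M / r^j * q^i" using M r by (intro mult_left_mono pw) auto
        finally show ?thesis .
      qed
      note bnd = this
      have sg: "summable (\<lambda>i. M / r^j * q^i)" using q by (intro summable_mult summable_geometric) auto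
      show "summable (\<lambda>i. norm (c i j * x^i))"
        by (rule summable_comparison_test'[OF sg, where N=0]) (use bnd in simp_all)
    qed
    have outer: "((\<lambda>j. b j x * y^j) has_sum G x y) UNIV"
    proof (rule norm_summable_imp_has_sum)
      show "(\<lambda>j. b j x * y^j) sums G x y"
        using holomorphic_power_series[OF hol2[OF xR(1)] xR(2)] by (simp add: bder[OF xR(1)])
      have "norm (b j x * y^j) \<le> M * q^j" for j
      proof -
        have "norm (b j x * y^j) = norm (b j x) * norm y ^ j" by (simp add: norm_mult norm_power)
        also have "\<dots> \<le> M / r^j * norm y ^ j" by (intro mult_right_mono bbound xR) auto
        also have "\<dots> = M * (norm y / r)^j" by (simp add: power_divide)
        also have "\<dots> \<le> M * q^j" using M r by (intro mult_left_mono pw) auto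
        finally show ?thesis .
      qed
      note bnd = this
      have sg: "summable (\<lambda>j. M * q^j)" using q by (intro summable_mult summable_geometric) auto
      show "summable (\<lambda>j. norm (b j x * y^j))"
        by (rule summable_comparison_test'[OF sg, where N=0]) (use bnd in simp_all)
    qed
    have summ: "(\<lambda>(j,i). c i j * x^i * y^j) summable_on UNIV"
    proof -
      have "(\<lambda>p. norm ((\<lambda>(j,i). c i j * x^i * y^j) p)) summable_on UNIV"
      proof (rule Infinite_Sum.abs_summable_on_comparison_test'[OF geom2_summable[OF q less_imp_le[OF M(1)]]])
        fix p :: "nat \<times> nat"
        obtain j i where p: "p = (j,i)" by force
        have "norm (c i j * x^i * y^j) = norm (c i j) * norm x ^ i * norm y ^ j" by (simp add: norm_mult norm_power)
        also have "\<dots> \<le> M / r^j / r^i * norm x ^ i * norm y ^ j" by (intro mult_right_mono cbound) auto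
        also have "\<dots> = M * (norm y / r)^j * (norm x / r)^i" by (simp add: power_divide)
        also have "\<dots> \<le> M * q^j * q^i" using M r q
          by (intro mult_mono mult_left_mono pw) (auto simp: zero_le_mult_iff)
        finally show "norm ((\<lambda>(j,i). c i j * x^i * y^j) p) \<le> (\<lambda>(j,i). M * q^j * q^i) p" by (simp add: p)
      qed
      then show ?thesis by (rule abs_summable_summable)
    qed
    have "((\<lambda>(j,i). c i j * x^i * y^j) has_sum G x y) (Sigma UNIV (\<lambda>_. UNIV))"
    proof (rule has_sum_SigmaI[where g = "\<lambda>j. b j x * y^j"])
      fix j :: nat
      show "((\<lambda>i. (\<lambda>(j,i). c i j * x^i * y^j) (j, i)) has_sum b j x * y^j) UNIV"
        using has_sum_cmult_left[OF inner[of j], of "y^j"] by simp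
    qed (use outer summ in auto)
    then have "((\<lambda>(j,i). c i j * x^i * y^j) has_sum G x y) (prod.swap ` UNIV)" by simp
    then show "((\<lambda>(i,j). c i j * x^i * y^j) has_sum G x y) UNIV"
      by (subst (asm) has_sum_reindex) (auto simp: o_def case_prod_unfold)
  qed
qed

lemma real_analytic_complexify:
  assumes "real_analytic_at z 0"
  obtains Z r where "r > 0" "Z holomorphic_on ball 0 r"
    "\<And>t. \<bar>t\<bar> < r \<Longrightarrow> Z (complex_of_real t) = complex_of_real (z t)"
proof -
  obtain a r where r: "r > 0" and hs: "\<And>t. t \<in> ball 0 r \<Longrightarrow> ((\<lambda>n. a n * (t - 0) ^ n) has_sum z t) UNIV"
    using assms unfolding real_analytic_at_def by blast
  define Z where "Z w = (\<Sum>n. complex_of_real (a n) * w^n)" for w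
  have sums: "(\<lambda>n. complex_of_real (a n) * (w - 0)^n) sums Z w" if w: "w \<in> ball 0 r" for w
  proof -
    define t where "t = (norm w + r) / 2"
    have t: "t \<in> ball 0 r" "norm w \<le> t" "0 \<le> t" using w r by (auto simp: t_def)
    have "(\<lambda>n. a n * t ^ n) summable_on UNIV" using hs[OF t(1)] by (auto simp: summable_on_def)
    then have "(\<lambda>n. norm (a n * t ^ n)) summable_on UNIV"
      by (rule iffD1[OF summable_on_iff_abs_summable_on_real])
    then have s1: "summable (\<lambda>n. norm (a n * t ^ n))" by (rule summable_on_imp_summable)
    have "summable (\<lambda>n. norm (complex_of_real (a n) * w ^ n))"
    proof (rule summable_comparison_test'[OF s1, where N=0])
      fix n :: nat
      have "norm (norm (complex_of_real (a n) * w ^ n)) = \<bar>a n\<bar> * norm w ^ n" by (simp add: norm_mult norm_power)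
      also have "\<dots> \<le> \<bar>a n\<bar> * t ^ n" using t by (intro mult_left_mono power_mono) auto
      also have "\<dots> = norm (a n * t ^ n)" using t by (simp add: abs_mult power_abs)
      finally show "norm (norm (complex_of_real (a n) * w ^ n)) \<le> norm (a n * t ^ n)" .
    qed
    then have "summable (\<lambda>n. complex_of_real (a n) * w ^ n)" by (rule summable_norm_cancel)
    then show ?thesis by (simp add: Z_def summable_sums)
  qed
  have "Z holomorphic_on ball 0 r" by (rule power_series_holomorphic[OF sums])
  moreover have "Z (complex_of_real t) = complex_of_real (z t)" if "\<bar>t\<bar> < r" for t
  proof -
    have "(\<lambda>n. a n * t ^ n) sums z t" using has_sum_imp_sums[OF hs[of t]] that by simp
    then have "(\<lambda>n. complex_of_real (a n * t ^ n)) sums complex_of_real (z t)" by (rule sums_of_real)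
    moreover have "(\<lambda>n. complex_of_real (a n) * (complex_of_real t - 0)^n) sums Z (complex_of_real t)"
      using sums[of "complex_of_real t"] that by simp
    ultimately show ?thesis by (simp add: sums_unique2)
  qed
  ultimately show ?thesis using that r by blast
qed

lemma complexify_deriv:
  fixes Z :: "complex \<Rightarrow> complex"
  assumes r: "r > 0" and hol: "Z holomorphic_on ball 0 r"
    and eq: "\<And>t. \<bar>t\<bar> < r \<Longrightarrow> Z (complex_of_real t) = complex_of_real (z t)"
    and t: "\<bar>t\<bar> < r"
  shows "(z has_real_derivative Re (deriv Z (complex_of_real t))) (at t)"
    "deriv Z (complex_of_real t) = complex_of_real (Re (deriv Z (complex_of_real t)))"
proof -
  define D where "D = deriv Z (complex_of_real t)"
  have "(Z has_field_derivative D) (at (complex_of_real t))"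
    unfolding D_def by (rule holomorphic_derivI[OF hol]) (use t in auto)
  then have "((\<lambda>s. Z (complex_of_real s)) has_vector_derivative D) (at t)"
    by (rule has_vector_derivative_real_field)
  then have d: "((\<lambda>s. complex_of_real (z s)) has_vector_derivative D) (at t)"
  proof (rule has_vector_derivative_transform_within_open)
    show "open {s::real. \<bar>s\<bar> < r}" by (intro open_Collect_less continuous_intros)
  qed (use t eq in auto)
  then have "((\<lambda>s. Re (complex_of_real (z s))) has_real_derivative Re D) (at t)"
    "((\<lambda>s. Im (complex_of_real (z s))) has_real_derivative Im D) (at t)"
    by (auto simp: has_vector_derivative_complex_iff)
  then have 1: "(z has_real_derivative Re D) (at t)" and 2: "((\<lambda>s. 0) has_real_derivative Im D) (at t)"
    by simp_all
  have "Im D = 0" using DERIV_unique[OF 2 DERIV_const] .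
  then show "(z has_real_derivative Re (deriv Z (complex_of_real t))) (at t)"
    "deriv Z (complex_of_real t) = complex_of_real (Re (deriv Z (complex_of_real t)))"
    using 1 by (auto simp: D_def complex_eq_iff)
qed

lemma le_zero_if_le_geom:
  fixes a C :: real
  assumes "\<And>k::nat. a \<le> C * (1/2)^k"
  shows "a \<le> 0"
proof (rule ccontr)
  assume "\<not> a \<le> 0"
  then have a: "a > 0" by simp
  then have C: "C > 0" using assms[of 0] by simp
  obtain k where "(1/2::real)^k < a / C" using real_arch_pow_inv[of "a/C" "1/2"] a C by auto
  then have "C * (1/2)^k < a" using C by (simp add: field_simps)
  then show False using assms[of k] by simp
qed

lemma geom_eventually_less:
  fixes C e :: real
  assumes "e > 0"
  shows "eventually (\<lambda>k::nat. C * (1/2)^k < e) sequentially"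
proof -
  have "((\<lambda>k::nat. C * (1/2::real)^k) \<longlongrightarrow> C * 0) sequentially"
    by (intro tendsto_mult tendsto_const LIMSEQ_power_zero) auto
  then show ?thesis using assms by (simp add: order_tendstoD(2))
qed

lemma implicit_holo:
  fixes H :: "complex \<Rightarrow> complex"
  assumes \<rho>: "0 < \<rho>0" "\<rho>0 < \<rho>1" and hol: "H holomorphic_on ball 0 \<rho>1"
  obtains \<delta> \<tau> where "\<delta> > 0"
    "continuous_on (cball 0 \<delta> \<times> cball 0 \<delta>) (\<lambda>(x,y). \<tau> x y)"
    "\<And>y. y \<in> cball 0 \<delta> \<Longrightarrow> (\<lambda>x. \<tau> x y) holomorphic_on ball 0 \<delta>"
    "\<And>x. x \<in> cball 0 \<delta> \<Longrightarrow> \<tau> x holomorphic_on ball 0 \<delta>"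
    "\<And>x y. x \<in> cball 0 \<delta> \<Longrightarrow> y \<in> cball 0 \<delta> \<Longrightarrow> \<tau> x y \<in> cball 0 \<rho>0 \<and> \<tau> x y = y - x * H (\<tau> x y)"
    "\<And>x y s. x \<in> cball 0 \<delta> \<Longrightarrow> y \<in> cball 0 \<delta> \<Longrightarrow> s \<in> cball 0 \<rho>0 \<Longrightarrow> s = y - x * H s \<Longrightarrow> s = \<tau> x y"
proof -
  have cb: "cball (0::complex) \<rho>0 \<subseteq> ball 0 \<rho>1" using \<rho> by auto
  have contH: "continuous_on (cball 0 \<rho>0) H"
    using holomorphic_on_imp_continuous_on[OF holomorphic_on_subset[OF hol cb]] .
  have holD: "deriv H holomorphic_on ball 0 \<rho>1" using hol by (intro holomorphic_deriv) auto
  have contD: "continuous_on (cball 0 \<rho>0) (deriv H)"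
    using holomorphic_on_imp_continuous_on[OF holomorphic_on_subset[OF holD cb]] .
  obtain MH where MH: "MH > 0" "\<And>s. s \<in> cball 0 \<rho>0 \<Longrightarrow> norm (H s) \<le> MH"
  proof -
    have "compact (H ` cball 0 \<rho>0)" by (intro compact_continuous_image contH) auto
    then obtain B where "B>0" "\<forall>z \<in> H ` cball 0 \<rho>0. norm z \<le> B"
      using compact_imp_bounded bounded_pos by metis
    then show ?thesis using that by force
  qed
  obtain LH where LH: "LH > 0" "\<And>s. s \<in> cball 0 \<rho>0 \<Longrightarrow> norm (deriv H s) \<le> LH"
  proof -
    have "compact (deriv H ` cball 0 \<rho>0)" by (intro compact_continuous_image contD) auto
    then obtain B where "B>0" "\<forall>z \<in> deriv H ` cball 0 \<rho>0. norm z \<le> B"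
      using compact_imp_bounded bounded_pos by metis
    then show ?thesis using that by force
  qed
  have lip: "norm (H a - H b) \<le> LH * norm (a - b)" if "a \<in> cball 0 \<rho>0" "b \<in> cball 0 \<rho>0" for a b
  proof (rule field_differentiable_bound[where S="cball 0 \<rho>0" and f'="deriv H"])
    fix s assume s: "s \<in> cball (0::complex) \<rho>0"
    have "(H has_field_derivative deriv H s) (at s)"
      by (rule holomorphic_derivI[OF hol]) (use s cb in auto)
    then show "(H has_field_derivative deriv H s) (at s within cball 0 \<rho>0)"
      by (rule has_field_derivative_at_within)
  qed (use LH that in auto)
  have tri: "norm (a - c) \<le> norm (a - b) + norm (b - c)" for a b c :: complex
    by (rule norm_diff_triangle_le) auto
  define \<delta> where "\<delta> = min (1/(2*LH)) (\<rho>0/(1+MH))"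
  have \<delta>: "\<delta> > 0" "\<delta> * LH \<le> 1/2" "\<delta> + \<delta> * MH \<le> \<rho>0"
  proof -
    show "\<delta> > 0" using LH MH \<rho> by (simp add: \<delta>_def)
    have "\<delta> \<le> 1/(2*LH)" by (simp add: \<delta>_def)
    then show "\<delta> * LH \<le> 1/2" using LH by (simp add: field_simps)
    have "\<delta> \<le> \<rho>0/(1+MH)" by (simp add: \<delta>_def)
    then have "\<delta> * (1 + MH) \<le> \<rho>0" using MH by (simp add: field_simps)
    then show "\<delta> + \<delta> * MH \<le> \<rho>0" by (simp add: algebra_simps)
  qed
  define D where "D = cball (0::complex) \<delta>"
  define \<Phi> where "\<Phi> x y s = y - x * H s" for x y s :: complex
  have \<Phi>_in: "\<Phi> x y s \<in> cball 0 \<rho>0" if "x \<in> D" "y \<in> D" "s \<in> cball 0 \<rho>0" for x y s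
  proof -
    have "norm (\<Phi> x y s) \<le> norm y + norm x * norm (H s)"
      using norm_triangle_ineq4[of y "x * H s"] by (simp add: \<Phi>_def norm_mult)
    also have "\<dots> \<le> \<delta> + \<delta> * MH"
      using that MH \<delta>(1) by (intro add_mono mult_mono) (auto simp: D_def)
    also have "\<dots> \<le> \<rho>0" by (rule \<delta>(3))
    finally show ?thesis by simp
  qed
  have \<Phi>_contr: "norm (\<Phi> x y s - \<Phi> x y s') \<le> 1/2 * norm (s - s')"
    if "x \<in> D" "y \<in> D" "s \<in> cball 0 \<rho>0" "s' \<in> cball 0 \<rho>0" for x y s s'
  proof -
    have "norm (\<Phi> x y s - \<Phi> x y s') = norm x * norm (H s - H s')"
      unfolding \<Phi>_def by (simp add: norm_mult[symmetric] algebra_simps norm_minus_commute)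
    also have "\<dots> \<le> \<delta> * (LH * norm (s - s'))"
      using that \<delta>(1) by (intro mult_mono lip) (auto simp: D_def)
    also have "\<dots> = (\<delta> * LH) * norm (s - s')" by simp
    also have "\<dots> \<le> 1/2 * norm (s - s')" using \<delta>(2) by (intro mult_right_mono) auto
    finally show ?thesis .
  qed
  define it where "it k x y = (\<Phi> x y ^^ k) 0" for k x y
  have it_Suc: "it (Suc k) x y = \<Phi> x y (it k x y)" for k x y by (simp add: it_def)
  have it_0: "it 0 x y = 0" for x y by (simp add: it_def)
  have it_in: "it k x y \<in> cball 0 \<rho>0" if "x \<in> D" "y \<in> D" for k x y
  proof (induction k)
    case (Suc k) then show ?case using \<Phi>_in[OF that Suc] by (simp add: it_Suc)
  qed (use \<rho> in \<open>simp add: it_0\<close>)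
  have it_step: "norm (it (Suc k) x y - it k x y) \<le> \<rho>0 * (1/2)^k" if "x \<in> D" "y \<in> D" for k x y
  proof (induction k)
    case 0
    then show ?case using \<Phi>_in[OF that, of 0] \<rho> by (simp add: it_0 it_Suc)
  next
    case (Suc k)
    have "norm (it (Suc (Suc k)) x y - it (Suc k) x y) \<le> 1/2 * norm (it (Suc k) x y - it k x y)"
      using \<Phi>_contr[OF that it_in[OF that, of "Suc k"] it_in[OF that, of k]]
      by (metis it_Suc)
    also have "\<dots> \<le> 1/2 * (\<rho>0 * (1/2)^k)" using Suc by simp
    finally show ?case by simp
  qed
  have it_cauchy: "norm (it (k + d) x y - it k x y) \<le> 2 * \<rho>0 * (1/2)^k - 2 * \<rho>0 * (1/2)^(k+d)"
    if "x \<in> D" "y \<in> D" for k d x y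
  proof (induction d)
    case 0 then show ?case by simp
  next
    case (Suc d)
    have "norm (it (k + Suc d) x y - it k x y) \<le> norm (it (Suc (k + d)) x y - it (k+d) x y) + norm (it (k + d) x y - it k x y)"
      using tri[where a="it (k + Suc d) x y" and b="it (k+d) x y" and c="it k x y"] by simp
    also have "\<dots> \<le> \<rho>0 * (1/2)^(k+d) + (2 * \<rho>0 * (1/2)^k - 2 * \<rho>0 * (1/2)^(k+d))"
      using it_step[OF that, of "k+d"] Suc by linarith
    also have "\<dots> = 2 * \<rho>0 * (1/2)^k - 2 * \<rho>0 * (1/2)^(k + Suc d)" by (simp add: field_simps)
    finally show ?case .
  qed
  have it_cauchy': "norm (it m x y - it k x y) \<le> 2 * \<rho>0 * (1/2)^k" if xy: "x \<in> D" "y \<in> D" and km: "k \<le> m" for k m x y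
  proof -
    obtain d where "m = k + d" using km le_Suc_ex by blast
    moreover have "0 \<le> 2*\<rho>0*(1/2::real)^(k+d)" using \<rho> by simp
    ultimately show ?thesis using it_cauchy[OF xy, of k d] by simp
  qed
  define \<tau> where "\<tau> x y = lim (\<lambda>k. it k x y)" for x y
  have conv: "(\<lambda>k. it k x y) \<longlonglongrightarrow> \<tau> x y" if "x \<in> D" "y \<in> D" for x y
  proof -
    have "Cauchy (\<lambda>k. it k x y)"
    proof (rule metric_CauchyI)
      fix e :: real assume "e > 0"
      obtain N where N: "4 * \<rho>0 * (1/2)^N < e"
        using eventually_sequentially[THEN iffD1, OF geom_eventually_less[OF \<open>e>0\<close>, of "4*\<rho>0"]] by auto
      show "\<exists>N. \<forall>m\<ge>N. \<forall>n\<ge>N. dist (it m x y) (it n x y) < e"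
      proof (intro exI allI impI)
        fix m n assume "N \<le> m" "N \<le> n"
        have "dist (it m x y) (it n x y) \<le> norm (it m x y - it N x y) + norm (it n x y - it N x y)"
          using tri[where a="it m x y" and b="it N x y" and c="it n x y"] by (simp add: dist_norm norm_minus_commute)
        also have "\<dots> \<le> 2 * \<rho>0 * (1/2)^N + 2 * \<rho>0 * (1/2)^N"
          using it_cauchy'[OF that \<open>N \<le> m\<close>] it_cauchy'[OF that \<open>N \<le> n\<close>] by linarith
        finally show "dist (it m x y) (it n x y) < e" using N by linarith
      qed
    qed
    then show ?thesis unfolding \<tau>_def by (simp add: Cauchy_convergent_iff convergent_LIMSEQ_iff)
  qed
  have \<tau>_bound: "norm (\<tau> x y - it k x y) \<le> 2 * \<rho>0 * (1/2)^k" if "x \<in> D" "y \<in> D" for k x y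
  proof (rule tendsto_upperbound)
    show "((\<lambda>m. norm (it m x y - it k x y)) \<longlongrightarrow> norm (\<tau> x y - it k x y)) sequentially"
      by (intro tendsto_norm tendsto_diff conv that tendsto_const)
    show "eventually (\<lambda>m. norm (it m x y - it k x y) \<le> 2 * \<rho>0 * (1/2)^k) sequentially"
      using it_cauchy'[OF that] by (auto simp: eventually_sequentially)
  qed simp
  have \<tau>_in: "\<tau> x y \<in> cball 0 \<rho>0" if "x \<in> D" "y \<in> D" for x y
  proof -
    have "norm (\<tau> x y) \<le> \<rho>0"
    proof (rule tendsto_upperbound)
      show "((\<lambda>m. norm (it m x y)) \<longlongrightarrow> norm (\<tau> x y)) sequentially"
        by (intro tendsto_norm conv that)
      show "eventually (\<lambda>m. norm (it m x y) \<le> \<rho>0) sequentially"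
        using it_in[OF that] by auto
    qed simp
    then show ?thesis by simp
  qed
  have \<tau>_fix: "\<tau> x y = \<Phi> x y (\<tau> x y)" if "x \<in> D" "y \<in> D" for x y
  proof -
    have "norm (\<tau> x y - \<Phi> x y (\<tau> x y)) \<le> 0"
    proof (rule le_zero_if_le_geom[where C="2 * \<rho>0"])
      fix k :: nat
      have "norm (\<tau> x y - \<Phi> x y (\<tau> x y)) \<le> norm (\<tau> x y - it (Suc k) x y) + norm (\<Phi> x y (it k x y) - \<Phi> x y (\<tau> x y))"
        using tri[where a="\<tau> x y" and b="it (Suc k) x y" and c="\<Phi> x y (\<tau> x y)"] by (simp only: it_Suc)
      also have "\<dots> \<le> 2 * \<rho>0 * (1/2)^(Suc k) + 1/2 * (2 * \<rho>0 * (1/2)^k)"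
      proof (rule add_mono)
        show "norm (\<tau> x y - it (Suc k) x y) \<le> 2 * \<rho>0 * (1/2)^(Suc k)" by (rule \<tau>_bound[OF that])
        have "norm (\<Phi> x y (it k x y) - \<Phi> x y (\<tau> x y)) \<le> 1/2 * norm (it k x y - \<tau> x y)"
          by (rule \<Phi>_contr[OF that it_in[OF that] \<tau>_in[OF that]])
        also have "\<dots> \<le> 1/2 * (2 * \<rho>0 * (1/2)^k)"
          using \<tau>_bound[OF that, of k] by (simp add: norm_minus_commute)
        finally show "norm (\<Phi> x y (it k x y) - \<Phi> x y (\<tau> x y)) \<le> 1/2 * (2 * \<rho>0 * (1/2)^k)" .
      qed
      also have "\<dots> = 2 * \<rho>0 * (1/2)^k" by simp
      finally show "norm (\<tau> x y - \<Phi> x y (\<tau> x y)) \<le> 2 * \<rho>0 * (1/2)^k" .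
    qed
    then show ?thesis by simp
  qed
  have \<tau>_unique: "s = \<tau> x y" if "x \<in> D" "y \<in> D" "s \<in> cball 0 \<rho>0" "s = \<Phi> x y s" for x y s
  proof -
    have "norm (s - \<tau> x y) \<le> 1/2 * norm (s - \<tau> x y)"
      using \<Phi>_contr[OF that(1,2,3) \<tau>_in[OF that(1,2)]] \<tau>_fix[OF that(1,2)] that(4) by simp
    then show ?thesis by simp
  qed
  have ulim: "uniform_limit S (\<lambda>k p. it k (f p) (g p)) (\<lambda>p. \<tau> (f p) (g p)) sequentially"
    if "\<And>p. p \<in> S \<Longrightarrow> f p \<in> D \<and> g p \<in> D" for S :: "'z set" and f g
  proof (rule uniform_limitI)
    fix e :: real assume "e > 0"
    show "eventually (\<lambda>k. \<forall>p\<in>S. dist (it k (f p) (g p)) (\<tau> (f p) (g p)) < e) sequentially"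
      using geom_eventually_less[OF \<open>e>0\<close>, of "2*\<rho>0"]
    proof eventually_elim
      case (elim k)
      show ?case
      proof
        fix p assume "p \<in> S"
        then have "dist (it k (f p) (g p)) (\<tau> (f p) (g p)) \<le> 2 * \<rho>0 * (1/2)^k"
          using \<tau>_bound that by (simp add: dist_norm norm_minus_commute)
        then show "dist (it k (f p) (g p)) (\<tau> (f p) (g p)) < e" using elim by linarith
      qed
    qed
  qed
  have it_cont: "continuous_on (D \<times> D) (\<lambda>p. it k (fst p) (snd p))" for k
  proof (induction k)
    case 0 then show ?case by (simp add: it_0)
  next
    case (Suc k)
    have "continuous_on (D \<times> D) (\<lambda>p. snd p - fst p * H (it k (fst p) (snd p)))"
      by (intro continuous_intros continuous_on_compose2[OF contH Suc]) (auto intro: it_in)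
    then show ?case by (simp add: it_Suc \<Phi>_def)
  qed
  have \<tau>_cont: "continuous_on (D \<times> D) (\<lambda>p. \<tau> (fst p) (snd p))"
    by (rule uniform_limit_theorem[OF _ ulim[of "D \<times> D" fst snd]]) (use it_cont in auto)
  have it_hol1: "(\<lambda>x. it k x y) holomorphic_on ball 0 \<delta>" if "y \<in> D" for k y
  proof (induction k)
    case 0 then show ?case by (simp add: it_0)
  next
    case (Suc k)
    have "(\<lambda>x. y - x * H (it k x y)) holomorphic_on ball 0 \<delta>"
      by (intro holomorphic_intros holomorphic_on_compose_gen[OF Suc hol, unfolded o_def])
         (use it_in that cb in \<open>auto simp: D_def\<close>)
    then show ?case by (simp add: it_Suc \<Phi>_def)
  qed
  have it_hol2: "(\<lambda>y. it k x y) holomorphic_on ball 0 \<delta>" if "x \<in> D" for k x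
  proof (induction k)
    case 0 then show ?case by (simp add: it_0)
  next
    case (Suc k)
    have "(\<lambda>y. y - x * H (it k x y)) holomorphic_on ball 0 \<delta>"
      by (intro holomorphic_intros holomorphic_on_compose_gen[OF Suc hol, unfolded o_def])
         (use it_in that cb in \<open>auto simp: D_def\<close>)
    then show ?case by (simp add: it_Suc \<Phi>_def)
  qed
  have hol1: "(\<lambda>x. \<tau> x y) holomorphic_on ball 0 \<delta>" if y: "y \<in> D" for y
  proof (rule holomorphic_uniform_limit[where f="\<lambda>k x. it k x y"])
    show "eventually (\<lambda>k. continuous_on (cball 0 \<delta>) (\<lambda>x. it k x y) \<and> (\<lambda>x. it k x y) holomorphic_on ball 0 \<delta>) sequentially"
    proof (intro always_eventually allI conjI it_hol1 y)
      fix k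
      have "continuous_on (cball 0 \<delta>) (\<lambda>x. it k (fst (x, y)) (snd (x, y)))"
        by (rule continuous_on_compose2[OF it_cont[of k]]) (use y in \<open>auto simp: D_def intro!: continuous_intros\<close>)
      then show "continuous_on (cball 0 \<delta>) (\<lambda>x. it k x y)" by simp
    qed
    show "uniform_limit (cball 0 \<delta>) (\<lambda>k x. it k x y) (\<lambda>x. \<tau> x y) sequentially"
      using ulim[of "cball 0 \<delta>" "\<lambda>x. x" "\<lambda>_. y"] y by (auto simp: D_def)
  qed auto
  have hol2: "(\<lambda>y. \<tau> x y) holomorphic_on ball 0 \<delta>" if x: "x \<in> D" for x
  proof (rule holomorphic_uniform_limit[where f="\<lambda>k y. it k x y"])
    show "eventually (\<lambda>k. continuous_on (cball 0 \<delta>) (\<lambda>y. it k x y) \<and> (\<lambda>y. it k x y) holomorphic_on ball 0 \<delta>) sequentially"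
    proof (intro always_eventually allI conjI it_hol2 x)
      fix k
      have "continuous_on (cball 0 \<delta>) (\<lambda>y. it k (fst (x, y)) (snd (x, y)))"
        by (rule continuous_on_compose2[OF it_cont[of k]]) (use x in \<open>auto simp: D_def intro!: continuous_intros\<close>)
      then show "continuous_on (cball 0 \<delta>) (\<lambda>y. it k x y)" by simp
    qed
    show "uniform_limit (cball 0 \<delta>) (\<lambda>k y. it k x y) (\<lambda>y. \<tau> x y) sequentially"
      using ulim[of "cball 0 \<delta>" "\<lambda>_. x" "\<lambda>y. y"] x by (auto simp: D_def)
  qed auto
  show ?thesis
  proof (rule that[of \<delta> \<tau>])
    show "continuous_on (cball 0 \<delta> \<times> cball 0 \<delta>) (\<lambda>(x, y). \<tau> x y)"
      using \<tau>_cont by (simp add: D_def case_prod_unfold)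
  qed (use \<delta> hol1 hol2 \<tau>_in \<tau>_fix \<tau>_unique in \<open>auto simp: D_def \<Phi>_def\<close>)
qed

lemma forward_dir:
  fixes z :: "real \<Rightarrow> real" and T :: "real \<times> real \<Rightarrow> real" and U :: "(real \<times> real) set"
  assumes U: "open U" "(0, 0) \<in> U"
    and Teq: "\<forall>u\<in>U. snd u = fst u / (deriv z (T u))\<^sup>2 + T u"
    and an: "real_analytic2_at (\<lambda>u. 2 * fst u / deriv z (T u) + z (T u)) (0, 0)"
    and bo: "(\<lambda>u. (2 * fst u / deriv z (T u) + z (T u)) - (fst u + snd u)) \<in> O[nhds (0, 0)](\<lambda>u. (norm u)\<^sup>2)"
  shows "real_analytic_at z 0 \<and> (\<lambda>t. z t - t) \<in> O[nhds 0](\<lambda>t. t\<^sup>2)"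
proof -
  define f where "f u = 2 * fst u / deriv z (T u) + z (T u)" for u
  obtain e0 where e0: "e0 > 0" "ball (0,0) e0 \<subseteq> U" using U openE by blast
  have inU: "(0, t) \<in> U" if "\<bar>t\<bar> < e0" for t
    using e0 that by (auto simp: dist_Pair_Pair subset_iff)
  have fz: "f (0, t) = z t" if "\<bar>t\<bar> < e0" for t
  proof -
    have "T (0, t) = t" using Teq inU[OF that] by auto
    then show ?thesis by (simp add: f_def)
  qed
  have A: "real_analytic_at z 0"
  proof -
    obtain a r where r: "r > 0" and hs: "\<And>u. u \<in> ball (0,0) r \<Longrightarrow>
        ((\<lambda>(i,j). a i j * (fst u - fst (0::real,0::real)) ^ i * (snd u - snd (0::real,0::real)) ^ j) has_sum f u) UNIV"
      using an unfolding real_analytic2_at_def f_def by blast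
    show ?thesis unfolding real_analytic_at_def
    proof (intro exI[of _ "\<lambda>j. a 0 j"] exI[of _ "min r e0"] conjI ballI)
      show "min r e0 > 0" using r e0 by simp
      fix t :: real assume t: "t \<in> ball 0 (min r e0)"
      then have "(0, t) \<in> ball (0,0) r" by (auto simp: dist_Pair_Pair)
      from hs[OF this] have "((\<lambda>(i,j). a i j * 0 ^ i * t ^ j) has_sum f (0, t)) UNIV" by simp
      then have "((\<lambda>(i,j). a i j * 0 ^ i * t ^ j) has_sum f (0, t)) (range (Pair 0))"
        by (rule has_sum_cong_neutral[THEN iffD1, rotated -1]) (auto simp: image_iff)
      then have "(((\<lambda>(i,j). a i j * 0 ^ i * t ^ j) \<circ> Pair 0) has_sum f (0, t)) UNIV"
        by (subst (asm) has_sum_reindex) (auto intro: inj_onI)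
      moreover have "f (0, t) = z t" using t by (intro fz) auto
      ultimately show "((\<lambda>n. a 0 n * (t - 0) ^ n) has_sum z t) UNIV" by (simp add: o_def)
    qed
  qed
  have B: "(\<lambda>t. z t - t) \<in> O[nhds 0](\<lambda>t. t\<^sup>2)"
  proof -
    from bo obtain c where c: "c > 0" and ev: "eventually (\<lambda>u. norm (f u - (fst u + snd u)) \<le> c * norm ((norm u)\<^sup>2)) (nhds (0,0))"
      unfolding f_def by (elim landau_o.bigE) auto
    from ev obtain d where d: "d > 0" and dd: "\<And>u. dist u (0,0) < d \<Longrightarrow> norm (f u - (fst u + snd u)) \<le> c * norm ((norm u)\<^sup>2)"
      unfolding eventually_nhds_metric by blast
    show ?thesis
    proof (rule landau_o.bigI[OF c])
      show "eventually (\<lambda>t. norm (z t - t) \<le> c * norm (t\<^sup>2)) (nhds 0)"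
        unfolding eventually_nhds_metric
      proof (intro exI[of _ "min d e0"] conjI allI impI)
        show "min d e0 > 0" using d e0 by simp
        fix t :: real assume "dist t 0 < min d e0"
        then have t: "\<bar>t\<bar> < d" "\<bar>t\<bar> < e0" by auto
        have "dist (0, t) (0::real, 0::real) < d" using t by (simp add: dist_Pair_Pair)
        from dd[OF this] have "norm (f (0,t) - t) \<le> c * norm ((norm (0::real, t))\<^sup>2)" by simp
        then show "norm (z t - t) \<le> c * norm (t\<^sup>2)" using fz[OF t(2)] by (simp add: norm_Pair)
      qed
    qed
  qed
  show ?thesis using A B by blast
qed

lemma deriv_lipschitz_at:
  fixes g :: "real \<Rightarrow> real"
  assumes "(g has_real_derivative g') (at 0)"
  obtains c e where "c > 0" "e > 0" "\<And>s. \<bar>s\<bar> < e \<Longrightarrow> \<bar>g s - g 0\<bar> \<le> c * \<bar>s\<bar>"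
proof -
  have "((\<lambda>s. (g s - g 0) / (s - 0)) \<longlongrightarrow> g') (at 0)"
    using assms by (simp add: has_field_derivative_iff)
  then have "eventually (\<lambda>s. dist ((g s - g 0) / (s - 0)) g' < 1) (at 0)"
    by (rule tendstoD) simp
  then obtain e where e: "e > 0" and ee: "\<And>s. s \<noteq> 0 \<Longrightarrow> dist s 0 < e \<Longrightarrow> dist ((g s - g 0) / (s - 0)) g' < 1"
    unfolding eventually_at by blast
  show ?thesis
  proof (rule that[of "\<bar>g'\<bar> + 1" e])
    fix s :: real assume s: "\<bar>s\<bar> < e"
    show "\<bar>g s - g 0\<bar> \<le> (\<bar>g'\<bar> + 1) * \<bar>s\<bar>"
    proof (cases "s = 0")
      case False
      have "\<bar>(g s - g 0) / s - g'\<bar> < 1" using ee[OF False] s by (simp add: dist_real_def)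
      then have "\<bar>(g s - g 0) / s\<bar> \<le> \<bar>g'\<bar> + 1" by linarith
      then show ?thesis using False by (simp add: abs_divide field_simps)
    qed simp
  qed (use e in auto)
qed

lemma O_converse:
  fixes z :: "real \<Rightarrow> real" and T :: "real \<times> real \<Rightarrow> real" and U :: "(real \<times> real) set"
  assumes C2: "\<exists>e>0. (\<forall>t\<in>ball 0 e. (z has_real_derivative deriv z t) (at t)
                        \<and> (deriv z has_real_derivative deriv (deriv z) t) (at t))
                  \<and> continuous_on (ball 0 e) (deriv (deriv z))"
    and U: "open U" "(0, 0) \<in> U"
    and Tcont: "continuous_on U T"
    and T0: "T (0, 0) = 0"
    and Teq: "\<forall>u\<in>U. snd u = fst u / (deriv z (T u))\<^sup>2 + T u"
    and zO: "(\<lambda>t. z t - t) \<in> O[nhds 0](\<lambda>t. t\<^sup>2)"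
  shows "(\<lambda>u. (2 * fst u / deriv z (T u) + z (T u)) - (fst u + snd u)) \<in> O[nhds (0, 0)](\<lambda>u. (norm u)\<^sup>2)"
proof -
  obtain d1: "(z has_real_derivative deriv z 0) (at 0)"
    and d2: "(deriv z has_real_derivative deriv (deriv z) 0) (at 0)"
  proof -
    from C2 obtain e where e: "e > 0" and all: "\<forall>t\<in>ball 0 e. (z has_real_derivative deriv z t) (at t)
                        \<and> (deriv z has_real_derivative deriv (deriv z) t) (at t)" by blast
    have "(0::real) \<in> ball 0 e" using e by simp
    from bspec[OF all this] show ?thesis using that by blast
  qed
  from zO obtain c1 where c1: "c1 > 0" and ev1: "eventually (\<lambda>t. norm (z t - t) \<le> c1 * norm (t\<^sup>2)) (nhds 0)"
    by (elim landau_o.bigE) auto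
  from ev1 obtain e1 where e1: "e1 > 0" and zb: "\<And>t. dist t 0 < e1 \<Longrightarrow> \<bar>z t - t\<bar> \<le> c1 * t\<^sup>2"
    unfolding eventually_nhds_metric by auto
  have z0: "z 0 = 0" using zb[of 0] e1 by simp
  have dz0: "deriv z 0 = 1"
  proof -
    have "((\<lambda>t. z t - t) has_real_derivative 0) (at 0)"
    proof -
      have lim: "((\<lambda>t. (z t - t) / t) \<longlongrightarrow> 0) (at 0)"
      proof (rule tendsto_sandwich[where f="\<lambda>t. - (c1 * \<bar>t\<bar>)" and h="\<lambda>t. c1 * \<bar>t\<bar>"])
        have "eventually (\<lambda>t. dist t 0 < e1 \<and> t \<noteq> 0) (at (0::real))"
          using e1 unfolding eventually_at by (auto intro!: exI[of _ e1])
        then have ev: "eventually (\<lambda>t. \<bar>(z t - t) / t\<bar> \<le> c1 * \<bar>t\<bar>) (at (0::real))"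
        proof (rule eventually_mono)
          fix t :: real assume t: "dist t 0 < e1 \<and> t \<noteq> 0"
          have "\<bar>z t - t\<bar> \<le> c1 * (\<bar>t\<bar> * \<bar>t\<bar>)" using zb[of t] t by (simp add: power2_eq_square abs_mult)
          then show "\<bar>(z t - t) / t\<bar> \<le> c1 * \<bar>t\<bar>" using t by (simp add: abs_divide divide_le_eq mult_ac)
        qed
        show "eventually (\<lambda>t. - (c1 * \<bar>t\<bar>) \<le> (z t - t) / t) (at 0)"
          using ev by (rule eventually_mono) linarith
        show "eventually (\<lambda>t. (z t - t) / t \<le> c1 * \<bar>t\<bar>) (at 0)"
          using ev by (rule eventually_mono) linarith
        show "((\<lambda>t. - (c1 * \<bar>t\<bar>)) \<longlongrightarrow> 0) (at (0::real))"
          by (rule tendsto_eq_intros refl | simp)+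
        show "((\<lambda>t. c1 * \<bar>t\<bar>) \<longlongrightarrow> 0) (at (0::real))"
          by (rule tendsto_eq_intros refl | simp)+
      qed
      show ?thesis unfolding has_field_derivative_iff using lim z0 by simp
    qed
    moreover have "((\<lambda>t. z t - t) has_real_derivative deriv z 0 - 1) (at 0)"
      using DERIV_diff[OF d1 DERIV_ident] by simp
    ultimately show ?thesis using DERIV_unique by fastforce
  qed
  have dh1: "((\<lambda>s. 1 / deriv z s) has_real_derivative - deriv (deriv z) 0) (at 0)"
    using DERIV_inverse_fun[OF d2] dz0 by (simp add: divide_inverse)
  have dh2: "((\<lambda>s. 1 / (deriv z s)\<^sup>2) has_real_derivative - 2 * deriv (deriv z) 0) (at 0)"
  proof -
    have "((\<lambda>s. (deriv z s)\<^sup>2) has_real_derivative 2 * deriv (deriv z) 0) (at 0)"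
      using DERIV_power[OF d2, of 2] dz0 by simp
    from DERIV_inverse_fun[OF this] show ?thesis using dz0 by (simp add: divide_inverse)
  qed
  obtain c2 e2 where c2: "c2 > 0" "e2 > 0" and h1b: "\<And>s. \<bar>s\<bar> < e2 \<Longrightarrow> \<bar>1 / deriv z s - 1\<bar> \<le> c2 * \<bar>s\<bar>"
    using deriv_lipschitz_at[OF dh1] dz0 by (metis div_by_1)
  obtain c3 e3 where c3: "c3 > 0" "e3 > 0" and h2b: "\<And>s. \<bar>s\<bar> < e3 \<Longrightarrow> \<bar>1 / (deriv z s)\<^sup>2 - 1\<bar> \<le> c3 * \<bar>s\<bar>"
    using deriv_lipschitz_at[OF dh2] dz0 by (metis div_by_1 one_power2)
  define eT where "eT = min (min e1 e2) (min e3 (1 / c3))"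
  have eT: "eT > 0" "eT \<le> e1" "eT \<le> e2" "eT \<le> e3" "c3 * eT \<le> 1"
  proof -
    show "eT > 0" "eT \<le> e1" "eT \<le> e2" "eT \<le> e3" using e1 c2 c3 by (auto simp: eT_def)
    have "eT \<le> 1 / c3" by (simp add: eT_def)
    then show "c3 * eT \<le> 1" using c3 by (simp add: field_simps)
  qed
  obtain d where d: "d > 0" and dT: "\<And>u. u \<in> U \<Longrightarrow> dist u (0,0) < d \<Longrightarrow> \<bar>T u\<bar> < eT"
    using Tcont U(2) eT(1) unfolding continuous_on_iff by (metis T0 dist_real_def diff_zero)
  obtain d0 where d0: "d0 > 0" "ball (0,0) d0 \<subseteq> U" using U openE by blast
  define C where "C = 6 * c2 + 9 * c1 + 3 * c3"
  have C: "C > 0" using c1 c2 c3 by (simp add: C_def)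
  show ?thesis
  proof (rule landau_o.bigI[OF C])
    show "eventually (\<lambda>u. norm ((2 * fst u / deriv z (T u) + z (T u)) - (fst u + snd u)) \<le> C * norm ((norm u)\<^sup>2)) (nhds (0,0))"
      unfolding eventually_nhds_metric
    proof (intro exI[of _ "min d d0"] conjI allI impI)
      show "min d d0 > 0" using d d0 by simp
      fix u :: "real \<times> real" assume "dist u (0,0) < min d d0"
      then have ud: "dist u (0,0) < d" and ud0: "dist u (0,0) < d0" by auto
      have uU: "u \<in> U" using d0(2) ud0 by (auto simp: dist_commute)
      obtain p q where u: "u = (p, q)" by force
      define N where "N = norm u"
      have pN: "\<bar>p\<bar> \<le> N" and qN: "\<bar>q\<bar> \<le> N" unfolding N_def u
        using norm_fst_le[of p q] norm_snd_le[of q p] by auto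
      define t where "t = T u"
      have tb: "\<bar>t\<bar> < eT" using dT[OF uU ud] by (simp add: t_def)
      define Hh where "Hh = 1 / (deriv z t)\<^sup>2"
      define h where "h = 1 / deriv z t"
      have Hb: "\<bar>Hh - 1\<bar> \<le> c3 * \<bar>t\<bar>" unfolding Hh_def using h2b tb eT by simp
      have hb: "\<bar>h - 1\<bar> \<le> c2 * \<bar>t\<bar>" unfolding h_def using h1b tb eT by simp
      have zt: "\<bar>z t - t\<bar> \<le> c1 * t\<^sup>2" using zb[of t] tb eT by simp
      have "q = p / (deriv z t)\<^sup>2 + t" using bspec[OF Teq uU] by (simp add: u t_def)
      then have teq: "t = q - p * Hh" by (simp add: Hh_def)
      have "c3 * \<bar>t\<bar> \<le> c3 * eT" using c3 tb by simp
      then have Hb2: "\<bar>Hh\<bar> \<le> 2" using Hb eT by linarith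
      have "\<bar>t\<bar> \<le> \<bar>q\<bar> + \<bar>p\<bar> * \<bar>Hh\<bar>" using teq by (simp add: abs_mult[symmetric])
      also have "\<dots> \<le> N + N * 2" using pN qN Hb2 by (intro add_mono mult_mono) auto
      finally have tN: "\<bar>t\<bar> \<le> 3 * N" by simp
      have N0: "0 \<le> N" by (simp add: N_def)
      have eq: "(2 * fst u / deriv z (T u) + z (T u)) - (fst u + snd u)
              = 2 * p * (h - 1) + (z t - t) - p * (Hh - 1)"
      proof -
        have "fst u = p" "snd u = q" "T u = t" by (simp_all add: u t_def)
        moreover have "q = t + p * Hh" using teq by simp
        ultimately show ?thesis by (simp add: h_def divide_inverse algebra_simps)
      qed
      have "\<bar>2 * p * (h - 1) + (z t - t) - p * (Hh - 1)\<bar> \<le> 2 * \<bar>p\<bar> * \<bar>h - 1\<bar> + \<bar>z t - t\<bar> + \<bar>p\<bar> * \<bar>Hh - 1\<bar>"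
      proof -
        have a1: "\<bar>2 * p * (h - 1)\<bar> = 2 * \<bar>p\<bar> * \<bar>h - 1\<bar>" by (simp add: abs_mult)
        have a2: "\<bar>p * (Hh - 1)\<bar> = \<bar>p\<bar> * \<bar>Hh - 1\<bar>" by (simp add: abs_mult)
        show ?thesis unfolding a1[symmetric] a2[symmetric] by arith
      qed
      also have "\<dots> \<le> 2 * N * (c2 * (3 * N)) + c1 * (3 * N)\<^sup>2 + N * (c3 * (3 * N))"
      proof -
        have "c2 * \<bar>t\<bar> \<le> c2 * (3 * N)" by (rule mult_left_mono[OF tN]) (use c2 in simp)
        then have hb': "\<bar>h - 1\<bar> \<le> c2 * (3 * N)" using hb by linarith
        have "c3 * \<bar>t\<bar> \<le> c3 * (3 * N)" by (rule mult_left_mono[OF tN]) (use c3 in simp)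
        then have Hb': "\<bar>Hh - 1\<bar> \<le> c3 * (3 * N)" using Hb by linarith
        have "\<bar>t\<bar>\<^sup>2 \<le> (3 * N)\<^sup>2" using tN by (rule power_mono) simp
        then have "t\<^sup>2 \<le> (3 * N)\<^sup>2" by simp
        then have "c1 * t\<^sup>2 \<le> c1 * (3 * N)\<^sup>2" by (rule mult_left_mono) (use c1 in simp)
        then have zt': "\<bar>z t - t\<bar> \<le> c1 * (3 * N)\<^sup>2" using zt by linarith
        have m1: "2 * \<bar>p\<bar> * \<bar>h - 1\<bar> \<le> 2 * N * (c2 * (3 * N))"
          by (rule mult_mono[of "2 * \<bar>p\<bar>" "2 * N" "\<bar>h - 1\<bar>" "c2 * (3 * N)"]) (use pN hb' N0 in auto)
        have m2: "\<bar>p\<bar> * \<bar>Hh - 1\<bar> \<le> N * (c3 * (3 * N))"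
          by (rule mult_mono[of "\<bar>p\<bar>" N "\<bar>Hh - 1\<bar>" "c3 * (3 * N)"]) (use pN Hb' N0 in auto)
        show ?thesis using m1 m2 zt' by linarith
      qed
      also have "\<dots> = C * N\<^sup>2" by (simp add: C_def power2_eq_square algebra_simps)
      finally show "norm ((2 * fst u / deriv z (T u) + z (T u)) - (fst u + snd u)) \<le> C * norm ((norm u)\<^sup>2)"
        using eq by (simp add: N_def)
    qed
  qed
qed

lemma analytic_converse:
  fixes z :: "real \<Rightarrow> real" and T :: "real \<times> real \<Rightarrow> real" and U :: "(real \<times> real) set"
  assumes nz: "deriv z 0 \<noteq> 0"
    and U: "open U" "(0, 0) \<in> U"
    and Tcont: "continuous_on U T"
    and T0: "T (0, 0) = 0"
    and Teq: "\<forall>u\<in>U. snd u = fst u / (deriv z (T u))\<^sup>2 + T u"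
    and za: "real_analytic_at z 0"
  shows "real_analytic2_at (\<lambda>u. 2 * fst u / deriv z (T u) + z (T u)) (0, 0)"
proof -
  obtain Z r where r: "r > 0" and Zhol: "Z holomorphic_on ball 0 r"
    and Zeq: "\<And>t. \<bar>t\<bar> < r \<Longrightarrow> Z (complex_of_real t) = complex_of_real (z t)"
    using real_analytic_complexify[OF za] by blast
  have dZ: "deriv Z (complex_of_real t) = complex_of_real (deriv z t)" if t: "\<bar>t\<bar> < r" for t
  proof -
    note cd = complexify_deriv[OF r Zhol Zeq t]
    have "deriv z t = Re (deriv Z (complex_of_real t))" using DERIV_imp_deriv[OF cd(1)] .
    with cd(2) show ?thesis by simp
  qed
  define Z' where "Z' = deriv Z"
  have Z'hol: "Z' holomorphic_on ball 0 r" unfolding Z'_def by (rule holomorphic_deriv[OF Zhol]) simp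
  have Z'0: "Z' 0 \<noteq> 0" using dZ[of 0] r nz by (simp add: Z'_def)
  have "isCont Z' 0"
    using holomorphic_on_imp_continuous_on[OF Z'hol] r
    by (simp add: continuous_on_eq_continuous_at)
  from continuous_at_avoid[OF this Z'0] obtain e where e: "e > 0" and eZ: "\<And>y. dist 0 y < e \<Longrightarrow> Z' y \<noteq> 0"
    by blast
  define \<rho>1 where "\<rho>1 = min e r"
  define \<rho>0 where "\<rho>0 = \<rho>1 / 2"
  have \<rho>: "0 < \<rho>0" "\<rho>0 < \<rho>1" "\<rho>1 \<le> r" using e r by (auto simp: \<rho>0_def \<rho>1_def)
  have nz1: "Z' w \<noteq> 0" if "w \<in> ball 0 \<rho>1" for w using that eZ by (auto simp: \<rho>1_def)
  have sub1: "ball (0::complex) \<rho>1 \<subseteq> ball 0 r" using \<rho> by auto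
  define Hf where "Hf w = 1 / (Z' w)\<^sup>2" for w
  define K where "K w = 1 / Z' w" for w
  have Hhol: "Hf holomorphic_on ball 0 \<rho>1" unfolding Hf_def
    using holomorphic_on_subset[OF Z'hol sub1] nz1 by (intro holomorphic_intros) auto
  have Khol: "K holomorphic_on ball 0 \<rho>1" unfolding K_def
    using holomorphic_on_subset[OF Z'hol sub1] nz1 by (intro holomorphic_intros) auto
  have Zhol1: "Z holomorphic_on ball 0 \<rho>1" using holomorphic_on_subset[OF Zhol sub1] .
  have cb: "cball (0::complex) \<rho>0 \<subseteq> ball 0 \<rho>1" using \<rho> by auto
  have contK: "continuous_on (cball 0 \<rho>0) K"
    using holomorphic_on_imp_continuous_on[OF holomorphic_on_subset[OF Khol cb]] .
  have contZ: "continuous_on (cball 0 \<rho>0) Z"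
    using holomorphic_on_imp_continuous_on[OF holomorphic_on_subset[OF Zhol1 cb]] .
  obtain \<delta> \<tau> where \<delta>: "\<delta> > 0"
    and tcont: "continuous_on (cball 0 \<delta> \<times> cball 0 \<delta>) (\<lambda>(x,y). \<tau> x y)"
    and thol1: "\<And>y. y \<in> cball 0 \<delta> \<Longrightarrow> (\<lambda>x. \<tau> x y) holomorphic_on ball 0 \<delta>"
    and thol2: "\<And>x. x \<in> cball 0 \<delta> \<Longrightarrow> \<tau> x holomorphic_on ball 0 \<delta>"
    and tfix: "\<And>x y. x \<in> cball 0 \<delta> \<Longrightarrow> y \<in> cball 0 \<delta> \<Longrightarrow> \<tau> x y \<in> cball 0 \<rho>0 \<and> \<tau> x y = y - x * Hf (\<tau> x y)"
    and tuniq: "\<And>x y s. x \<in> cball 0 \<delta> \<Longrightarrow> y \<in> cball 0 \<delta> \<Longrightarrow> s \<in> cball 0 \<rho>0 \<Longrightarrow> s = y - x * Hf s \<Longrightarrow> s = \<tau> x y"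
    by (rule implicit_holo[OF \<rho>(1) \<rho>(2) Hhol]) (rule that)
  define Gf where "Gf x y = 2 * x * K (\<tau> x y) + Z (\<tau> x y)" for x y
  have tin: "\<tau> x y \<in> cball 0 \<rho>0" if "x \<in> cball 0 \<delta>" "y \<in> cball 0 \<delta>" for x y using tfix[OF that] by blast
  have tc: "continuous_on (ball 0 \<delta> \<times> ball 0 \<delta>) (\<lambda>p. \<tau> (fst p) (snd p))"
  proof -
    have "continuous_on (ball 0 \<delta> \<times> ball 0 \<delta>) (\<lambda>(x,y). \<tau> x y)"
      by (rule continuous_on_subset[OF tcont]) (simp add: Sigma_mono)
    then show ?thesis by (simp add: case_prod_unfold)
  qed
  have tin': "(\<lambda>p. \<tau> (fst p) (snd p)) ` (ball 0 \<delta> \<times> ball 0 \<delta>) \<subseteq> cball 0 \<rho>0"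
    by (auto intro!: tin)
  have cK: "continuous_on (ball 0 \<delta> \<times> ball 0 \<delta>) (\<lambda>p. K (\<tau> (fst p) (snd p)))"
    by (rule continuous_on_compose2[OF contK tc tin'])
  have cZ: "continuous_on (ball 0 \<delta> \<times> ball 0 \<delta>) (\<lambda>p. Z (\<tau> (fst p) (snd p)))"
    by (rule continuous_on_compose2[OF contZ tc tin'])
  have Gcont: "continuous_on (ball 0 \<delta> \<times> ball 0 \<delta>) (\<lambda>(x,y). Gf x y)"
  proof -
    have "continuous_on (ball 0 \<delta> \<times> ball 0 \<delta>) (\<lambda>p. 2 * fst p * K (\<tau> (fst p) (snd p)) + Z (\<tau> (fst p) (snd p)))"
      by (intro continuous_on_add continuous_on_mult continuous_on_const continuous_on_fst continuous_on_id cK cZ)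
    then show ?thesis by (simp add: Gf_def case_prod_unfold)
  qed
  have Ghol1: "(\<lambda>x. Gf x y) holomorphic_on ball 0 \<delta>" if y: "y \<in> ball 0 \<delta>" for y
  proof -
    have y': "y \<in> cball 0 \<delta>" using y by auto
    have img: "(\<lambda>x. \<tau> x y) ` ball 0 \<delta> \<subseteq> ball 0 \<rho>1"
    proof
      fix w assume "w \<in> (\<lambda>x. \<tau> x y) ` ball 0 \<delta>"
      then obtain x where x: "x \<in> ball 0 \<delta>" and w: "w = \<tau> x y" by blast
      have "x \<in> cball 0 \<delta>" using x by auto
      from tin[OF this y'] cb show "w \<in> ball 0 \<rho>1" using w by blast
    qed
    have h1: "(\<lambda>x. K (\<tau> x y)) holomorphic_on ball 0 \<delta>"
      using holomorphic_on_compose_gen[OF thol1[OF y'] Khol img] by (simp add: o_def)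
    have h2: "(\<lambda>x. Z (\<tau> x y)) holomorphic_on ball 0 \<delta>"
      using holomorphic_on_compose_gen[OF thol1[OF y'] Zhol1 img] by (simp add: o_def)
    show ?thesis unfolding Gf_def
      by (intro holomorphic_on_add holomorphic_on_mult holomorphic_on_const holomorphic_on_ident h1 h2)
  qed
  have Ghol2: "Gf x holomorphic_on ball 0 \<delta>" if x: "x \<in> ball 0 \<delta>" for x
  proof -
    have x': "x \<in> cball 0 \<delta>" using x by auto
    have img: "\<tau> x ` ball 0 \<delta> \<subseteq> ball 0 \<rho>1"
    proof
      fix w assume "w \<in> \<tau> x ` ball 0 \<delta>"
      then obtain y where y: "y \<in> ball 0 \<delta>" and w: "w = \<tau> x y" by blast
      have "y \<in> cball 0 \<delta>" using y by auto
      from tin[OF x' this] cb show "w \<in> ball 0 \<rho>1" using w by blast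
    qed
    have h1: "(\<lambda>y. K (\<tau> x y)) holomorphic_on ball 0 \<delta>"
      using holomorphic_on_compose_gen[OF thol2[OF x'] Khol img] by (simp add: o_def)
    have h2: "(\<lambda>y. Z (\<tau> x y)) holomorphic_on ball 0 \<delta>"
      using holomorphic_on_compose_gen[OF thol2[OF x'] Zhol1 img] by (simp add: o_def)
    have "(\<lambda>y. 2 * x * K (\<tau> x y) + Z (\<tau> x y)) holomorphic_on ball 0 \<delta>"
      by (intro holomorphic_on_add holomorphic_on_mult holomorphic_on_const h1 h2)
    then show ?thesis by (simp add: Gf_def[abs_def])
  qed
  obtain c where c: "\<And>x y. norm x < \<delta>/2 \<Longrightarrow> norm y < \<delta>/2 \<Longrightarrow>
            ((\<lambda>(i,j). c i j * x^i * y^j) has_sum Gf x y) UNIV"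
    using two_var_series[OF \<delta> Gcont Ghol1 Ghol2] by blast
  have "\<exists>d>0. \<forall>x'\<in>U. dist x' (0,0) < d \<longrightarrow> dist (T x') (T (0,0)) < \<rho>0"
    using Tcont U(2) \<rho>(1) unfolding continuous_on_iff by blast
  then obtain d where d: "d > 0" and dT: "\<And>u. u \<in> U \<Longrightarrow> dist u (0,0) < d \<Longrightarrow> dist (T u) (T (0,0)) < \<rho>0"
    by blast
  obtain d0 where d0: "d0 > 0" "ball (0,0) d0 \<subseteq> U" using U openE by blast
  define \<epsilon> where "\<epsilon> = min (min d d0) (\<delta>/2)"
  have \<epsilon>: "\<epsilon> > 0" using d d0 \<delta> by (simp add: \<epsilon>_def)
  show ?thesis unfolding real_analytic2_at_def
  proof (intro exI[of _ "\<lambda>i j. Re (c i j)"] exI[of _ \<epsilon>] conjI ballI)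
    show "\<epsilon> > 0" by (rule \<epsilon>)
    fix u :: "real \<times> real" assume u: "u \<in> ball (0,0) \<epsilon>"
    obtain p q where pq: "u = (p, q)" by force
    have ud: "dist u (0,0) < d" and ud0: "dist u (0,0) < d0" and un: "norm u < \<delta>/2"
      using u by (auto simp: \<epsilon>_def dist_commute dist_norm zero_prod_def[symmetric])
    have uU: "u \<in> U" using d0(2) ud0 by (auto simp: dist_commute)
    have pN: "\<bar>p\<bar> < \<delta>/2" and qN: "\<bar>q\<bar> < \<delta>/2"
      using norm_fst_le[of p q] norm_snd_le[of q p] un pq by auto
    define t where "t = T u"
    have tb: "\<bar>t\<bar> < \<rho>0" using dT[OF uU ud] T0 by (simp add: t_def dist_real_def)
    have tr: "\<bar>t\<bar> < r" using tb \<rho> by linarith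
    have xy: "complex_of_real p \<in> cball 0 \<delta>" "complex_of_real q \<in> cball 0 \<delta>" using pN qN by auto
    have Hr: "Hf (complex_of_real t) = complex_of_real (1 / (deriv z t)\<^sup>2)"
      using dZ[OF tr] by (simp add: Hf_def Z'_def)
    have Kr: "K (complex_of_real t) = complex_of_real (1 / deriv z t)"
      using dZ[OF tr] by (simp add: K_def Z'_def)
    have "q = p / (deriv z t)\<^sup>2 + t" using bspec[OF Teq uU] by (simp add: pq t_def)
    then have "complex_of_real t = complex_of_real q - complex_of_real p * Hf (complex_of_real t)"
      by (simp add: Hr)
    then have tau: "\<tau> (complex_of_real p) (complex_of_real q) = complex_of_real t"
      using tuniq[OF xy, of "complex_of_real t"] tb by simp
    have Gval: "Gf (complex_of_real p) (complex_of_real q) = complex_of_real (2 * fst u / deriv z (T u) + z (T u))"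
      by (simp add: Gf_def tau Kr Zeq[OF tr] pq[symmetric] t_def[symmetric]) (simp add: pq divide_inverse)
    have "((\<lambda>(i,j). c i j * complex_of_real p ^ i * complex_of_real q ^ j) has_sum
            complex_of_real (2 * fst u / deriv z (T u) + z (T u))) UNIV"
      using c[of "complex_of_real p" "complex_of_real q"] pN qN Gval by simp
    from has_sum_bounded_linear[OF bounded_linear_Re this]
    have "((\<lambda>x. Re ((\<lambda>(i,j). c i j * complex_of_real p ^ i * complex_of_real q ^ j) x)) has_sum
            (2 * fst u / deriv z (T u) + z (T u))) UNIV" by simp
    then show "((\<lambda>(i,j). Re (c i j) * (fst u - fst (0::real, 0::real)) ^ i * (snd u - snd (0::real, 0::real)) ^ j) has_sum
            (2 * fst u / deriv z (T u) + z (T u))) UNIV"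
      by (simp add: pq case_prod_unfold)
  qed
qed

theorem lemma13:
  fixes z :: "real \<Rightarrow> real" and T :: "real \<times> real \<Rightarrow> real" and U :: "(real \<times> real) set"
  assumes C2: "\<exists>e>0. (\<forall>t\<in>ball 0 e. (z has_real_derivative deriv z t) (at t)
                        \<and> (deriv z has_real_derivative deriv (deriv z) t) (at t))
                  \<and> continuous_on (ball 0 e) (deriv (deriv z))"
    and nz: "deriv z 0 \<noteq> 0"
    and U: "open U" "(0, 0) \<in> U"
    and Tcont: "continuous_on U T"
    and T0: "T (0, 0) = 0"
    and Teq: "\<forall>u\<in>U. snd u = fst u / (deriv z (T u))\<^sup>2 + T u"
  shows "(real_analytic2_at (\<lambda>u. 2 * fst u / deriv z (T u) + z (T u)) (0, 0)
          \<and> (\<lambda>u. (2 * fst u / deriv z (T u) + z (T u)) - (fst u + snd u))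
               \<in> O[nhds (0, 0)](\<lambda>u. (norm u)\<^sup>2))
     \<longleftrightarrow> (real_analytic_at z 0 \<and> (\<lambda>t. z t - t) \<in> O[nhds 0](\<lambda>t. t\<^sup>2))"
proof
  assume "real_analytic2_at (\<lambda>u. 2 * fst u / deriv z (T u) + z (T u)) (0, 0)
          \<and> (\<lambda>u. (2 * fst u / deriv z (T u) + z (T u)) - (fst u + snd u))
               \<in> O[nhds (0, 0)](\<lambda>u. (norm u)\<^sup>2)"
  then show "real_analytic_at z 0 \<and> (\<lambda>t. z t - t) \<in> O[nhds 0](\<lambda>t. t\<^sup>2)"
    using forward_dir[OF U Teq] by blast
next
  assume R: "real_analytic_at z 0 \<and> (\<lambda>t. z t - t) \<in> O[nhds 0](\<lambda>t. t\<^sup>2)"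
  show "real_analytic2_at (\<lambda>u. 2 * fst u / deriv z (T u) + z (T u)) (0, 0)
          \<and> (\<lambda>u. (2 * fst u / deriv z (T u) + z (T u)) - (fst u + snd u))
               \<in> O[nhds (0, 0)](\<lambda>u. (norm u)\<^sup>2)"
  proof
    show "real_analytic2_at (\<lambda>u. 2 * fst u / deriv z (T u) + z (T u)) (0, 0)"
      using analytic_converse[OF nz U Tcont T0 Teq] R by blast
    show "(\<lambda>u. (2 * fst u / deriv z (T u) + z (T u)) - (fst u + snd u))
               \<in> O[nhds (0, 0)](\<lambda>u. (norm u)\<^sup>2)"
      using O_converse[OF C2 U Tcont T0 Teq] R by blast
  qed
qed

end
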